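(* Let $\mathbf v\in\mathbb R^{n\times m}$ have all entries nonzero (strictly negative), and identify bipartite graphs on $([n],[m])$ with bipartite graphs on $([m],[n])$ in the natural way. Then $\mathrm{MWW}_{\text{non-lonely}}(\mathbf v)=\mathrm{MWW}_{\text{non-lonely}}(\mathbf v^T)$.
   Context: For a matrix $\mathbf w\in\mathbb R^{k\times l}_{<0}$ (rows = "agents" $[k]$, columns = "items" $[l]$) and $\tau\in\mathbb R^k_{>0}$, $G_\tau(\mathbf w)$ is the bipartite graph on $([k],[l])$ with edge $(i,j)$ iff $\tau_i|w_{i,j}|\le\tau_{i'}|w_{i',j}|$ for all $i'\in[k]$; $\mathrm{MWW}(\mathbf w)=\{G_\tau(\mathbf w):\tau\in\mathbb R^k_{>0}\}$. $\mathrm{MWW}_{\text{non-lonely}}(\mathbf w)$ is the set of graphs in $\mathrm{MWW}(\mathbf w)$ in which every row-vertex (agent) $i\in[k]$ is adjacent to at least one item. $\mathbf v^T$ is the transpose, in which the roles of agents and chores are exchanged. *)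

theory Defs
  imports Complex_Main
begin

text \<open>A k x l matrix is a function nat => nat => real, only entries with
  i < k (agents, indexed 0..<k) and j < l (items, indexed 0..<l) matter.
  A bipartite graph on ([k],[l]) is a set of pairs (agent, item).\<close>

definition G_tau :: "nat \<Rightarrow> nat \<Rightarrow> (nat \<Rightarrow> nat \<Rightarrow> real) \<Rightarrow> (nat \<Rightarrow> real) \<Rightarrow> (nat \<times> nat) set" where
  "G_tau k l w \<tau> = {(i, j). i < k \<and> j < l \<and>
      (\<forall>i' < k. \<tau> i * \<bar>w i j\<bar> \<le> \<tau> i' * \<bar>w i' j\<bar>)}"

definition MWW :: "nat \<Rightarrow> nat \<Rightarrow> (nat \<Rightarrow> nat \<Rightarrow> real) \<Rightarrow> (nat \<times> nat) set set" where
  "MWW k l w = {G_tau k l w \<tau> | \<tau>. \<forall>i < k. \<tau> i > 0}"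

definition MWW_non_lonely :: "nat \<Rightarrow> nat \<Rightarrow> (nat \<Rightarrow> nat \<Rightarrow> real) \<Rightarrow> (nat \<times> nat) set set" where
  "MWW_non_lonely k l w = {G \<in> MWW k l w. \<forall>i < k. \<exists>j < l. (i, j) \<in> G}"

definition mat_transpose :: "(nat \<Rightarrow> nat \<Rightarrow> real) \<Rightarrow> (nat \<Rightarrow> nat \<Rightarrow> real)" where
  "mat_transpose v = (\<lambda>i j. v j i)"

definition graph_swap :: "(nat \<times> nat) set \<Rightarrow> (nat \<times> nat) set" where
  "graph_swap G = (\<lambda>(a, b). (b, a)) ` G"

end

theory Submission
  imports Defs
begin

lemma main:
  fixes k l :: nat and w :: "nat \<Rightarrow> nat \<Rightarrow> real"
  assumes k: "k \<ge> 1" and nz: "\<forall>i<k. \<forall>j<l. w i j \<noteq> 0"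
    and G: "G \<in> MWW_non_lonely k l w"
  shows "graph_swap G \<in> MWW_non_lonely l k (mat_transpose w)"
proof -
  from G obtain \<tau> where tp: "\<forall>i<k. \<tau> i > 0" and Gt: "G = G_tau k l w \<tau>"
    and nl: "\<forall>i<k. \<exists>j<l. (i, j) \<in> G"
    unfolding MWW_non_lonely_def MWW_def by blast
  define \<beta> where "\<beta> j = Min ((\<lambda>i. \<tau> i * \<bar>w i j\<bar>) ` {..<k})" for j
  define \<sigma> where "\<sigma> j = 1 / \<beta> j" for j
  have ne: "{..<k} \<noteq> {}" using k by (metis lessThan_iff not_one_le_zero neq0_conv empty_iff)
  have ble: "\<beta> j \<le> \<tau> i * \<bar>w i j\<bar>" if "i < k" for i j
    unfolding \<beta>_def using that by (intro Min_le) auto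
  have bex: "\<exists>i<k. \<beta> j = \<tau> i * \<bar>w i j\<bar>" for j
  proof -
    have "\<beta> j \<in> (\<lambda>i. \<tau> i * \<bar>w i j\<bar>) ` {..<k}"
      unfolding \<beta>_def using ne by (intro Min_in) auto
    then show ?thesis by auto
  qed
  have bpos: "\<beta> j > 0" if "j < l" for j
    using bex[of j] tp nz that by auto
  have memG: "(i, j) \<in> G \<longleftrightarrow> i < k \<and> j < l \<and> \<tau> i * \<bar>w i j\<bar> = \<beta> j" for i j
  proof
    assume "(i, j) \<in> G"
    then have h: "i < k" "j < l" "\<forall>i'<k. \<tau> i * \<bar>w i j\<bar> \<le> \<tau> i' * \<bar>w i' j\<bar>"
      unfolding Gt G_tau_def by auto
    obtain i' where "i' < k" "\<beta> j = \<tau> i' * \<bar>w i' j\<bar>" using bex by blast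
    with h ble[of i j] show "i < k \<and> j < l \<and> \<tau> i * \<bar>w i j\<bar> = \<beta> j" by force
  next
    assume h: "i < k \<and> j < l \<and> \<tau> i * \<bar>w i j\<bar> = \<beta> j"
    then show "(i, j) \<in> G" unfolding Gt G_tau_def using ble by auto
  qed
  have sge: "\<sigma> j * \<bar>w i j\<bar> \<ge> 1 / \<tau> i" if "i < k" "j < l" for i j
  proof -
    have "\<beta> j \<le> \<tau> i * \<bar>w i j\<bar>" using ble that by auto
    then show ?thesis using bpos[OF that(2)] tp that unfolding \<sigma>_def
      by (simp add: divide_simps mult.commute)
  qed
  have seq: "\<sigma> j * \<bar>w i j\<bar> = 1 / \<tau> i \<longleftrightarrow> \<tau> i * \<bar>w i j\<bar> = \<beta> j"
    if "i < k" "j < l" for i j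
    using bpos[OF that(2)] tp that unfolding \<sigma>_def
    by (auto simp add: divide_simps mult.commute)
  have eqG: "graph_swap G = G_tau l k (mat_transpose w) \<sigma>"
  proof (rule set_eqI, clarify)
    fix j i
    show "(j, i) \<in> graph_swap G \<longleftrightarrow> (j, i) \<in> G_tau l k (mat_transpose w) \<sigma>"
    proof
      assume "(j, i) \<in> graph_swap G"
      then have "(i, j) \<in> G" unfolding graph_swap_def by auto
      then have h: "i < k" "j < l" "\<tau> i * \<bar>w i j\<bar> = \<beta> j" using memG by auto
      have "\<sigma> j * \<bar>w i j\<bar> = 1 / \<tau> i" using seq h by auto
      then show "(j, i) \<in> G_tau l k (mat_transpose w) \<sigma>"
        unfolding G_tau_def mat_transpose_def using h sge by auto
    next
      assume "(j, i) \<in> G_tau l k (mat_transpose w) \<sigma>"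
      then have h: "j < l" "i < k" "\<forall>j'<l. \<sigma> j * \<bar>w i j\<bar> \<le> \<sigma> j' * \<bar>w i j'\<bar>"
        unfolding G_tau_def mat_transpose_def by auto
      obtain j0 where j0: "j0 < l" "(i, j0) \<in> G" using nl h by blast
      then have "\<tau> i * \<bar>w i j0\<bar> = \<beta> j0" using memG by auto
      then have "\<sigma> j0 * \<bar>w i j0\<bar> = 1 / \<tau> i" using seq h j0 by auto
      with h j0 sge[of i j] have "\<sigma> j * \<bar>w i j\<bar> = 1 / \<tau> i" by force
      then have "(i, j) \<in> G" using seq h memG by auto
      then show "(j, i) \<in> graph_swap G" unfolding graph_swap_def by force
    qed
  qed
  have spos: "\<forall>j<l. \<sigma> j > 0" using bpos unfolding \<sigma>_def by auto
  have nl2: "\<forall>j<l. \<exists>i<k. (j, i) \<in> graph_swap G"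
  proof (intro allI impI)
    fix j assume "j < l"
    obtain i where "i < k" "\<beta> j = \<tau> i * \<bar>w i j\<bar>" using bex by blast
    then have "(i, j) \<in> G" using memG \<open>j < l\<close> by auto
    then show "\<exists>i<k. (j, i) \<in> graph_swap G" using \<open>i < k\<close>
      unfolding graph_swap_def by force
  qed
  show ?thesis unfolding MWW_non_lonely_def MWW_def using eqG spos nl2 by blast
qed

lemma swap_swap: "graph_swap (graph_swap G) = G"
  unfolding graph_swap_def by (auto simp: image_iff)

lemma tt: "mat_transpose (mat_transpose v) = v"
  unfolding mat_transpose_def by simp

theorem proposition3:
  fixes n m :: nat and v :: "nat \<Rightarrow> nat \<Rightarrow> real"
  assumes "n \<ge> 1" and "m \<ge> 1"
    and "\<forall>i < n. \<forall>j < m. v i j < 0"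
  shows "graph_swap ` MWW_non_lonely n m v = MWW_non_lonely m n (mat_transpose v)"
proof
  have nz: "\<forall>i<n. \<forall>j<m. v i j \<noteq> 0" using assms(3) by force
  show "graph_swap ` MWW_non_lonely n m v \<subseteq> MWW_non_lonely m n (mat_transpose v)"
    using main[OF assms(1) nz] by auto
  show "MWW_non_lonely m n (mat_transpose v) \<subseteq> graph_swap ` MWW_non_lonely n m v"
  proof
    fix H assume H: "H \<in> MWW_non_lonely m n (mat_transpose v)"
    have nz2: "\<forall>j<m. \<forall>i<n. mat_transpose v j i \<noteq> 0"
      using nz unfolding mat_transpose_def by auto
    have "graph_swap H \<in> MWW_non_lonely n m v"
      using main[OF assms(2) nz2 H] by (simp add: tt)
    then show "H \<in> graph_swap ` MWW_non_lonely n m v"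
      using swap_swap[of H] by (metis image_eqI)
  qed
qed

end
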